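(* Let $(S,K,I)$ be a homogeneous split graph and $\Phi=\Phi(S)$. Then: (1) for distinct $u,v\in I$, $\sigma_{uv}(S)=0$ if and only if $u$ and $v$ are twins in $S$; (2) $\sigma_{uv}(S)$ is a perfect square for every pair of distinct $u,v\in I$; (3) $\deg(S)\ge1$; in particular, if $d$ denotes the common degree in $S$ of the vertices of $I$, then $d\notin\{0,|K|\}$; (4) $\Phi$ has no induced subgraph isomorphic to $K_2\,\dot\cup\,K_1$; (5) $\operatorname{diam}(\Phi)\le 2$ (in particular $\Phi$ is connected); (6) $\Phi$ contains no induced cycle of length $5$ or more.
   Context: All graphs are finite and simple. A split graph is a graph $S$ whose vertex set is a disjoint union $V(S)=K\,\dot\cup\,I$ with $K$ a clique and $I$ an independent set; $(K,I)$ is called a bipartition of $S$, and $(S,K,I)$ denotes $S$ together with this fixed bipartition. For a split graph $(S,K,I)$ and distinct $u,v\in I$, $\sigma_{uv}(S)$ is the number of induced subgraphs of $S$ isomorphic to $P_4$ containing both $u$ and $v$. The factor graph $\Phi(S)$ is the loopless multigraph with vertex set $I$ having exactly $\sigma_{uv}(S)$ parallel edges between $u$ and $v$. Graph notions (connected, complete, clique, diameter, induced subgraph, etc.) applied to $\Phi(S)$ refer to its underlying simple graph, in which $u\sim v$ iff $\sigma_{uv}(S)\ge1$. $\deg(S)$ denotes the number of induced subgraphs of $S$ isomorphic to $P_4$ (equivalently the number of edges of $\Phi(S)$ counted with multiplicity). Two vertices $u,v$ of a graph $G$ are twins if $N_G(u)\setminus\{v\}=N_G(v)\setminus\{u\}$.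 A vertex $w$ of $(S,K,I)$ is swing if $N_S(w)=K\setminus\{w\}$. $(S,K,I)$ is balanced if $|K|=\omega(S)$ and $|I|=\alpha(S)$; it is known that $S$ is balanced iff it has no swing vertex. $(S,K,I)$ is homogeneous if it is balanced and all vertices of $I$ have the same degree in $S$. *)

theory Defs
  imports Main
begin

text \<open>A finite simple graph is given by a finite vertex set V and a symmetric,
irreflexive adjacency relation E (only its restriction to V matters).\<close>

definition simple_graph :: "'a set \<Rightarrow> ('a \<Rightarrow> 'a \<Rightarrow> bool) \<Rightarrow> bool" where
  "simple_graph V E \<longleftrightarrow> finite V \<and> (\<forall>x y. E x y \<longrightarrow> E y x) \<and> (\<forall>x. \<not> E x x)"

definition is_clique :: "('a \<Rightarrow> 'a \<Rightarrow> bool) \<Rightarrow> 'a set \<Rightarrow> bool" where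
  "is_clique E C \<longleftrightarrow> (\<forall>x\<in>C. \<forall>y\<in>C. x \<noteq> y \<longrightarrow> E x y)"

definition is_indep :: "('a \<Rightarrow> 'a \<Rightarrow> bool) \<Rightarrow> 'a set \<Rightarrow> bool" where
  "is_indep E A \<longleftrightarrow> (\<forall>x\<in>A. \<forall>y\<in>A. \<not> E x y)"

definition clique_number :: "'a set \<Rightarrow> ('a \<Rightarrow> 'a \<Rightarrow> bool) \<Rightarrow> nat" where
  "clique_number V E = Max (card ` {C. C \<subseteq> V \<and> is_clique E C})"

definition indep_number :: "'a set \<Rightarrow> ('a \<Rightarrow> 'a \<Rightarrow> bool) \<Rightarrow> nat" where
  "indep_number V E = Max (card ` {A. A \<subseteq> V \<and> is_indep E A})"

definition nbhd :: "'a set \<Rightarrow> ('a \<Rightarrow> 'a \<Rightarrow> bool) \<Rightarrow> 'a \<Rightarrow> 'a set" where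
  "nbhd V E v = {w \<in> V. E v w}"

definition vdeg :: "'a set \<Rightarrow> ('a \<Rightarrow> 'a \<Rightarrow> bool) \<Rightarrow> 'a \<Rightarrow> nat" where
  "vdeg V E v = card (nbhd V E v)"

definition split_graph :: "'a set \<Rightarrow> ('a \<Rightarrow> 'a \<Rightarrow> bool) \<Rightarrow> 'a set \<Rightarrow> 'a set \<Rightarrow> bool" where
  "split_graph V E K I \<longleftrightarrow> simple_graph V E \<and> V = K \<union> I \<and> K \<inter> I = {}
      \<and> is_clique E K \<and> is_indep E I"

definition balanced :: "'a set \<Rightarrow> ('a \<Rightarrow> 'a \<Rightarrow> bool) \<Rightarrow> 'a set \<Rightarrow> 'a set \<Rightarrow> bool" where
  "balanced V E K I \<longleftrightarrow> card K = clique_number V E \<and> card I = indep_number V E"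

definition homogeneous :: "'a set \<Rightarrow> ('a \<Rightarrow> 'a \<Rightarrow> bool) \<Rightarrow> 'a set \<Rightarrow> 'a set \<Rightarrow> bool" where
  "homogeneous V E K I \<longleftrightarrow> balanced V E K I \<and> (\<exists>d. \<forall>v\<in>I. vdeg V E v = d)"

definition induces_P4 :: "('a \<Rightarrow> 'a \<Rightarrow> bool) \<Rightarrow> 'a set \<Rightarrow> bool" where
  "induces_P4 E X \<longleftrightarrow> (\<exists>a b c d. X = {a, b, c, d} \<and> distinct [a, b, c, d]
      \<and> E a b \<and> E b c \<and> E c d \<and> \<not> E a c \<and> \<not> E a d \<and> \<not> E b d)"

definition P4_sets :: "'a set \<Rightarrow> ('a \<Rightarrow> 'a \<Rightarrow> bool) \<Rightarrow> 'a set set" where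
  "P4_sets V E = {X. X \<subseteq> V \<and> induces_P4 E X}"

definition sigma :: "'a set \<Rightarrow> ('a \<Rightarrow> 'a \<Rightarrow> bool) \<Rightarrow> 'a \<Rightarrow> 'a \<Rightarrow> nat" where
  "sigma V E u v = card {X \<in> P4_sets V E. u \<in> X \<and> v \<in> X}"

definition split_deg :: "'a set \<Rightarrow> ('a \<Rightarrow> 'a \<Rightarrow> bool) \<Rightarrow> nat" where
  "split_deg V E = card (P4_sets V E)"

text \<open>Adjacency in the underlying simple graph of the factor graph Phi(S) (vertex set I).\<close>
definition phi_adj :: "'a set \<Rightarrow> ('a \<Rightarrow> 'a \<Rightarrow> bool) \<Rightarrow> 'a \<Rightarrow> 'a \<Rightarrow> bool" where
  "phi_adj V E u v \<longleftrightarrow> u \<noteq> v \<and> sigma V E u v \<ge> 1"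

definition twins :: "'a set \<Rightarrow> ('a \<Rightarrow> 'a \<Rightarrow> bool) \<Rightarrow> 'a \<Rightarrow> 'a \<Rightarrow> bool" where
  "twins V E u v \<longleftrightarrow> nbhd V E u - {v} = nbhd V E v - {u}"

definition induced_cycle :: "('a \<Rightarrow> 'a \<Rightarrow> bool) \<Rightarrow> 'a list \<Rightarrow> bool" where
  "induced_cycle A cs \<longleftrightarrow> distinct cs \<and>
     (\<forall>i<length cs. \<forall>j<length cs. i \<noteq> j \<longrightarrow>
        (A (cs ! i) (cs ! j) \<longleftrightarrow> j = Suc i mod length cs \<or> i = Suc j mod length cs))"

end

theory Submission imports Defs begin

lemma nbhd_sub:
  assumes "split_graph V E K I" "u \<in> I"
  shows "nbhd V E u \<subseteq> K"
  using assms unfolding split_graph_def nbhd_def is_indep_def by blast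

lemma nbhd_fin:
  assumes "split_graph V E K I"
  shows "finite (nbhd V E u)"
  using assms unfolding split_graph_def simple_graph_def nbhd_def by auto

lemma finK: "split_graph V E K I \<Longrightarrow> finite K"
  unfolding split_graph_def simple_graph_def by auto
lemma finI: "split_graph V E K I \<Longrightarrow> finite I"
  unfolding split_graph_def simple_graph_def by auto

lemma clique_bound:
  assumes "split_graph V E K I" "balanced V E K I" "C \<subseteq> V" "is_clique E C"
  shows "card C \<le> card K"
proof -
  have fV: "finite V" using assms(1) unfolding split_graph_def simple_graph_def by auto
  have "finite {C. C \<subseteq> V \<and> is_clique E C}"
    by (rule finite_subset[of _ "Pow V"]) (use fV in auto)
  hence "card C \<le> Max (card ` {C. C \<subseteq> V \<and> is_clique E C})"
    using assms(3,4) by (intro Max_ge) auto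
  thus ?thesis using assms(2) unfolding balanced_def clique_number_def by simp
qed

lemma indep_bound:
  assumes "split_graph V E K I" "balanced V E K I" "C \<subseteq> V" "is_indep E C"
  shows "card C \<le> card I"
proof -
  have fV: "finite V" using assms(1) unfolding split_graph_def simple_graph_def by auto
  have "finite {C. C \<subseteq> V \<and> is_indep E C}"
    by (rule finite_subset[of _ "Pow V"]) (use fV in auto)
  hence "card C \<le> Max (card ` {C. C \<subseteq> V \<and> is_indep E C})"
    using assms(3,4) by (intro Max_ge) auto
  thus ?thesis using assms(2) unfolding balanced_def indep_number_def by simp
qed

lemma noswingI:
  assumes "split_graph V E K I" "balanced V E K I" "v \<in> I"
  shows "\<exists>k\<in>K. \<not> E v k"
proof (rule ccontr)
  assume "\<not> ?thesis"
  hence "is_clique E (insert v K)" using assms(1) unfolding split_graph_def simple_graph_def is_clique_def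
    by blast
  moreover have "insert v K \<subseteq> V" using assms unfolding split_graph_def by auto
  ultimately have "card (insert v K) \<le> card K" using clique_bound assms by blast
  moreover have "v \<notin> K" using assms unfolding split_graph_def by auto
  ultimately show False using finK[OF assms(1)] by simp
qed

lemma noswingK:
  assumes "split_graph V E K I" "balanced V E K I" "w \<in> K"
  shows "\<exists>i\<in>I. E w i"
proof (rule ccontr)
  assume "\<not> ?thesis"
  hence "is_indep E (insert w I)" using assms(1) unfolding split_graph_def simple_graph_def is_indep_def
    by blast
  moreover have "insert w I \<subseteq> V" using assms unfolding split_graph_def by auto
  ultimately have "card (insert w I) \<le> card I" using indep_bound assms by blast
  moreover have "w \<notin> I" using assms unfolding split_graph_def by auto
  ultimately show False using finI[OF assms(1)] by simp
qed

lemma P4_shape: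
  assumes sp: "split_graph V E K I" and X: "X \<in> P4_sets V E" and "u \<in> X" "v \<in> X" "u \<in> I" "v \<in> I" "u \<noteq> v"
  shows "\<exists>x y. x \<in> nbhd V E u - nbhd V E v \<and> y \<in> nbhd V E v - nbhd V E u \<and> X = {u,x,y,v}"
proof -
  from X obtain a b c d where XV: "X \<subseteq> V" and Xe: "X = {a,b,c,d}" and ds: "distinct [a,b,c,d]"
    and e: "E a b" "E b c" "E c d" "\<not> E a c" "\<not> E a d" "\<not> E b d"
    unfolding P4_sets_def induces_P4_def by blast
  have V: "V = K \<union> I" "K \<inter> I = {}" and cl: "is_clique E K" and ind: "is_indep E I"
    and sym: "\<And>x y. E x y \<Longrightarrow> E y x"
    using sp unfolding split_graph_def simple_graph_def by auto
  have abcd: "a \<in> V" "b \<in> V" "c \<in> V" "d \<in> V" using XV Xe by auto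
  have aI: "a \<in> I"
  proof (rule ccontr)
    assume "a \<notin> I" hence aK: "a \<in> K" using abcd V by auto
    have "c \<notin> K" using aK e(4) cl ds unfolding is_clique_def by auto
    moreover have "d \<notin> K" using aK e(5) cl ds unfolding is_clique_def by auto
    ultimately show False using abcd V e(3) ind unfolding is_indep_def by auto
  qed
  have dI: "d \<in> I"
  proof (rule ccontr)
    assume "d \<notin> I" hence dK: "d \<in> K" using abcd V by auto
    have "b \<notin> K" using dK e(6) cl ds unfolding is_clique_def by auto
    moreover have "a \<notin> K" using dK e(5) cl ds unfolding is_clique_def by auto
    ultimately show False using abcd V e(1) ind unfolding is_indep_def by auto
  qed
  have bK: "b \<in> K" using aI e(1) ind abcd V unfolding is_indep_def by auto
  have cK: "c \<in> K" using dI e(3) ind abcd V unfolding is_indep_def by auto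
  have uv: "(u = a \<and> v = d) \<or> (u = d \<and> v = a)"
    using assms(3-7) Xe bK cK V by auto
  thus ?thesis
  proof
    assume "u = a \<and> v = d"
    thus ?thesis using e abcd sym Xe unfolding nbhd_def
      by (intro exI[of _ b] exI[of _ c]) auto
  next
    assume "u = d \<and> v = a"
    thus ?thesis using e abcd sym Xe unfolding nbhd_def
      by (intro exI[of _ c] exI[of _ b]) auto
  qed
qed

lemma sigma_formula:
  assumes sp: "split_graph V E K I" and "u \<in> I" "v \<in> I" "u \<noteq> v"
  shows "sigma V E u v = card (nbhd V E u - nbhd V E v) * card (nbhd V E v - nbhd V E u)"
proof -
  let ?A = "nbhd V E u - nbhd V E v" and ?B = "nbhd V E v - nbhd V E u"
  let ?f = "\<lambda>(x,y). {u,x,y,v}"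
  have V: "V = K \<union> I" "K \<inter> I = {}" and cl: "is_clique E K" and ind: "is_indep E I"
    and sym: "\<And>x y. E x y \<Longrightarrow> E y x"
    using sp unfolding split_graph_def simple_graph_def by auto
  have AK: "?A \<subseteq> K" "?B \<subseteq> K" using nbhd_sub[OF sp] assms by auto
  have img: "?f ` (?A \<times> ?B) = {X \<in> P4_sets V E. u \<in> X \<and> v \<in> X}"
  proof
    have "{u,x,y,v} \<in> P4_sets V E" if xy: "x \<in> ?A" "y \<in> ?B" for x y
    proof -
      have xK: "x \<in> K" "y \<in> K" using xy AK by auto
      have "x \<noteq> y" using xy by auto
      hence "E x y" using xK cl unfolding is_clique_def by auto
      moreover have "E u x" "E v y" "\<not> E u y" "\<not> E v x" "x \<in> V" "y \<in> V"
        using xy unfolding nbhd_def by auto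
      moreover have "\<not> E u v" using ind assms unfolding is_indep_def by auto
      moreover have "x \<notin> I" "y \<notin> I" using xK V by auto
      ultimately have "induces_P4 E {u,x,y,v}" unfolding induces_P4_def
        using assms sym by (intro exI[of _ u] exI[of _ x] exI[of _ y] exI[of _ v]) auto
      thus "{u,x,y,v} \<in> P4_sets V E" using assms V \<open>x \<in> V\<close> \<open>y \<in> V\<close>
        unfolding P4_sets_def by auto
    qed
    thus "?f ` (?A \<times> ?B) \<subseteq> {X \<in> P4_sets V E. u \<in> X \<and> v \<in> X}" by auto
  next
    show "{X \<in> P4_sets V E. u \<in> X \<and> v \<in> X} \<subseteq> ?f ` (?A \<times> ?B)"
    proof clarify
      fix X assume "X \<in> P4_sets V E" "u \<in> X" "v \<in> X"
      then obtain x y where "x \<in> ?A" "y \<in> ?B" "X = {u,x,y,v}"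
        using P4_shape[OF sp] assms by metis
      thus "X \<in> ?f ` (?A \<times> ?B)" by force
    qed
  qed
  have inj: "inj_on ?f (?A \<times> ?B)"
  proof (rule inj_onI)
    fix p q assume pq: "p \<in> ?A \<times> ?B" "q \<in> ?A \<times> ?B" "?f p = ?f q"
    obtain x y x' y' where pe: "p = (x,y)" "q = (x',y')" by (cases p, cases q) auto
    have h: "x \<in> ?A" "y \<in> ?B" "x' \<in> ?A" "y' \<in> ?B" "{u,x,y,v} = {u,x',y',v}"
      using pq unfolding pe by auto
    have nI: "x \<notin> I" "y \<notin> I" "x' \<notin> I" "y' \<notin> I" using h AK V by auto
    hence "x \<noteq> u" "x \<noteq> v" "y \<noteq> u" "y \<noteq> v" "x' \<noteq> u" "x' \<noteq> v" "y' \<noteq> u" "y' \<noteq> v"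
      using assms by auto
    moreover have "x \<in> {u,x',y',v}" "y \<in> {u,x',y',v}" using h(5) by blast+
    ultimately have "x = x' \<or> x = y'" "y = x' \<or> y = y'" by auto
    hence "x = x' \<and> y = y'" using h(1-4) by blast
    thus "p = q" using pe by simp
  qed
  have fin: "finite ?A" "finite ?B" using nbhd_fin[OF sp] by auto
  have "sigma V E u v = card (?f ` (?A \<times> ?B))" unfolding sigma_def img ..
  also have "\<dots> = card (?A \<times> ?B)" using card_image[OF inj] .
  also have "\<dots> = card ?A * card ?B" by (simp add: card_cartesian_product)
  finally show ?thesis .
qed


lemma sigma_sq:
  assumes sp: "split_graph V E K I" and ho: "homogeneous V E K I" and "u \<in> I" "v \<in> I" "u \<noteq> v"
  shows "sigma V E u v = card (nbhd V E u - nbhd V E v) ^ 2"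
    and "card (nbhd V E v - nbhd V E u) = card (nbhd V E u - nbhd V E v)"
proof -
  obtain d where d: "\<forall>v\<in>I. vdeg V E v = d" using ho unfolding homogeneous_def by blast
  have c: "card (nbhd V E u) = card (nbhd V E v)" using d assms unfolding vdeg_def by auto
  have f: "finite (nbhd V E u \<inter> nbhd V E v)" using nbhd_fin[OF sp] by auto
  show e: "card (nbhd V E v - nbhd V E u) = card (nbhd V E u - nbhd V E v)"
    using card_Diff_subset_Int[of "nbhd V E u" "nbhd V E v"] card_Diff_subset_Int[of "nbhd V E v" "nbhd V E u"] f c
    by (simp add: Int_commute)
  show "sigma V E u v = card (nbhd V E u - nbhd V E v) ^ 2"
    using sigma_formula[OF sp assms(3-5)] e by (simp add: power2_eq_square)
qed

lemma sigma0_iff: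
  assumes sp: "split_graph V E K I" and ho: "homogeneous V E K I" and "u \<in> I" "v \<in> I" "u \<noteq> v"
  shows "sigma V E u v = 0 \<longleftrightarrow> nbhd V E u = nbhd V E v"
proof -
  obtain d where d: "\<forall>v\<in>I. vdeg V E v = d" using ho unfolding homogeneous_def by blast
  have c: "card (nbhd V E u) = card (nbhd V E v)" using d assms unfolding vdeg_def by auto
  have "sigma V E u v = 0 \<longleftrightarrow> nbhd V E u - nbhd V E v = {}"
    using sigma_sq[OF assms] nbhd_fin[OF sp] by auto
  also have "\<dots> \<longleftrightarrow> nbhd V E u = nbhd V E v"
    using card_subset_eq[of "nbhd V E v" "nbhd V E u"] nbhd_fin[OF sp, of v] c by auto
  finally show ?thesis .
qed

lemma phi_iff:
  assumes sp: "split_graph V E K I" and ho: "homogeneous V E K I" and "u \<in> I" "v \<in> I"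
  shows "phi_adj V E u v \<longleftrightarrow> u \<noteq> v \<and> nbhd V E u \<noteq> nbhd V E v"
  using sigma0_iff[OF sp ho assms(3,4)] unfolding phi_adj_def by auto

lemma twins_iff:
  assumes sp: "split_graph V E K I" and "u \<in> I" "v \<in> I"
  shows "twins V E u v \<longleftrightarrow> nbhd V E u = nbhd V E v"
proof -
  have "v \<notin> nbhd V E u" "u \<notin> nbhd V E v" using nbhd_sub[OF sp] assms sp
    unfolding split_graph_def by blast+
  thus ?thesis unfolding twins_def by auto
qed

lemma I_ne:
  assumes sp: "split_graph V E K I" and "V \<noteq> {}" and ho: "homogeneous V E K I"
  shows "I \<noteq> {}"
proof
  assume "I = {}"
  then obtain w where "w \<in> K" using assms unfolding split_graph_def by auto
  thus False using noswingK[OF sp _ \<open>w \<in> K\<close>] ho \<open>I = {}\<close> unfolding homogeneous_def by auto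
qed

lemma exists_diff:
  assumes sp: "split_graph V E K I" and "V \<noteq> {}" and ho: "homogeneous V E K I"
  shows "\<exists>a\<in>I. \<exists>b\<in>I. nbhd V E a \<noteq> nbhd V E b"
proof -
  have ba: "balanced V E K I" using ho unfolding homogeneous_def by auto
  obtain v where v: "v \<in> I" using I_ne[OF assms] by auto
  obtain k where k: "k \<in> K" "\<not> E v k" using noswingI[OF sp ba v] by auto
  obtain i where i: "i \<in> I" "E k i" using noswingK[OF sp ba k(1)] by auto
  have "k \<in> nbhd V E i" "k \<notin> nbhd V E v" using i k sp unfolding nbhd_def split_graph_def simple_graph_def
    by auto
  thus ?thesis using i v by blast
qed

lemma other_nbhd:
  assumes sp: "split_graph V E K I" and "V \<noteq> {}" and ho: "homogeneous V E K I"
  shows "\<exists>w\<in>I. nbhd V E w \<noteq> N"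
  using exists_diff[OF assms] by metis

theorem theorem3p2:
  fixes V K I :: "'a set" and E :: "'a \<Rightarrow> 'a \<Rightarrow> bool"
  assumes split: "split_graph V E K I"
    and nonempty: "V \<noteq> {}"
    and homog: "homogeneous V E K I"
  shows "(\<forall>u\<in>I. \<forall>v\<in>I. u \<noteq> v \<longrightarrow> (sigma V E u v = 0 \<longleftrightarrow> twins V E u v))
    \<and> (\<forall>u\<in>I. \<forall>v\<in>I. u \<noteq> v \<longrightarrow> (\<exists>k::nat. sigma V E u v = k ^ 2))
    \<and> split_deg V E \<ge> 1
    \<and> (\<forall>d. (\<forall>v\<in>I. vdeg V E v = d) \<longrightarrow> d \<noteq> 0 \<and> d \<noteq> card K)
    \<and> \<not> (\<exists>x\<in>I. \<exists>y\<in>I. \<exists>z\<in>I. distinct [x, y, z] \<and> phi_adj V E x y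
              \<and> \<not> phi_adj V E x z \<and> \<not> phi_adj V E y z)
    \<and> (\<forall>u\<in>I. \<forall>v\<in>I. u \<noteq> v \<longrightarrow>
           phi_adj V E u v \<or> (\<exists>w\<in>I. phi_adj V E u w \<and> phi_adj V E w v))
    \<and> \<not> (\<exists>cs. set cs \<subseteq> I \<and> length cs \<ge> 5 \<and> induced_cycle (phi_adj V E) cs)"
proof -
  have ba: "balanced V E K I" using homog unfolding homogeneous_def by auto
  have fV: "finite V" using split unfolding split_graph_def simple_graph_def by auto
  have P1: "\<forall>u\<in>I. \<forall>v\<in>I. u \<noteq> v \<longrightarrow> (sigma V E u v = 0 \<longleftrightarrow> twins V E u v)"
    using sigma0_iff[OF split homog] twins_iff[OF split] by simp
  have P2: "\<forall>u\<in>I. \<forall>v\<in>I. u \<noteq> v \<longrightarrow> (\<exists>k::nat. sigma V E u v = k ^ 2)"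
    using sigma_sq(1)[OF split homog] by blast
  have P3: "split_deg V E \<ge> 1"
  proof -
    obtain a b where ab: "a \<in> I" "b \<in> I" "nbhd V E a \<noteq> nbhd V E b"
      using exists_diff[OF split nonempty homog] by blast
    hence "a \<noteq> b" by auto
    hence "sigma V E a b \<noteq> 0" using sigma0_iff[OF split homog ab(1,2)] ab(3) by simp
    moreover have "sigma V E a b \<le> split_deg V E"
      unfolding sigma_def split_deg_def
      by (rule card_mono) (rule finite_subset[of _ "Pow V"], auto simp: P4_sets_def fV)
    ultimately show ?thesis by simp
  qed
  have P4: "\<forall>d. (\<forall>v\<in>I. vdeg V E v = d) \<longrightarrow> d \<noteq> 0 \<and> d \<noteq> card K"
  proof (intro allI impI)
    fix d assume d: "\<forall>v\<in>I. vdeg V E v = d"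
    obtain v where v: "v \<in> I" using I_ne[OF split nonempty homog] by auto
    obtain k where k: "k \<in> K" "\<not> E v k" using noswingI[OF split ba v] by auto
    obtain i where i: "i \<in> I" "E k i" using noswingK[OF split ba k(1)] by auto
    have "k \<in> nbhd V E i" using i k split unfolding nbhd_def split_graph_def simple_graph_def
      by auto
    hence "vdeg V E i \<noteq> 0" unfolding vdeg_def using nbhd_fin[OF split] by auto
    hence "d \<noteq> 0" using d i by auto
    moreover have "nbhd V E v \<subset> K" using nbhd_sub[OF split v] k unfolding nbhd_def by auto
    hence "vdeg V E v < card K" unfolding vdeg_def using psubset_card_mono finK[OF split] by blast
    hence "d \<noteq> card K" using d v by auto
    ultimately show "d \<noteq> 0 \<and> d \<noteq> card K" by blast
  qed
  have P5: "\<not> (\<exists>x\<in>I. \<exists>y\<in>I. \<exists>z\<in>I. distinct [x, y, z] \<and> phi_adj V E x y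
              \<and> \<not> phi_adj V E x z \<and> \<not> phi_adj V E y z)"
    using phi_iff[OF split homog] by auto
  have P6: "\<forall>u\<in>I. \<forall>v\<in>I. u \<noteq> v \<longrightarrow>
           phi_adj V E u v \<or> (\<exists>w\<in>I. phi_adj V E u w \<and> phi_adj V E w v)"
  proof (intro ballI impI)
    fix u v assume uv: "u \<in> I" "v \<in> I" "u \<noteq> v"
    show "phi_adj V E u v \<or> (\<exists>w\<in>I. phi_adj V E u w \<and> phi_adj V E w v)"
    proof (cases "nbhd V E u = nbhd V E v")
      case False thus ?thesis using phi_iff[OF split homog uv(1,2)] uv by auto
    next
      case True
      obtain w where w: "w \<in> I" "nbhd V E w \<noteq> nbhd V E u"
        using other_nbhd[OF split nonempty homog] by blast
      hence "phi_adj V E u w" "phi_adj V E w v" using phi_iff[OF split homog] uv True by auto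
      thus ?thesis using w by blast
    qed
  qed
  have P7: "\<not> (\<exists>cs. set cs \<subseteq> I \<and> length cs \<ge> 5 \<and> induced_cycle (phi_adj V E) cs)"
  proof
    assume "\<exists>cs. set cs \<subseteq> I \<and> length cs \<ge> 5 \<and> induced_cycle (phi_adj V E) cs"
    then obtain cs where cs: "set cs \<subseteq> I" "length cs \<ge> 5" "induced_cycle (phi_adj V E) cs" by blast
    let ?n = "length cs"
    have ds: "distinct cs" and ic: "\<And>i j. i < ?n \<Longrightarrow> j < ?n \<Longrightarrow> i \<noteq> j \<Longrightarrow>
        (phi_adj V E (cs ! i) (cs ! j) \<longleftrightarrow> j = Suc i mod ?n \<or> i = Suc j mod ?n)"
      using cs(3) unfolding induced_cycle_def by auto
    have lt: "0 < ?n" "2 < ?n" "3 < ?n" using cs(2) by auto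
    have inI: "cs ! 0 \<in> I" "cs ! 2 \<in> I" "cs ! 3 \<in> I" using cs(1) lt nth_mem[of _ cs] by blast+
    have m: "Suc 0 mod ?n = 1" "Suc 2 mod ?n = 3" "Suc 3 mod ?n = 4" "0 mod ?n = 0" using cs(2) by auto
    have "\<not> phi_adj V E (cs ! 0) (cs ! 2)" using ic[OF lt(1) lt(2)] m by auto
    moreover have "\<not> phi_adj V E (cs ! 0) (cs ! 3)" using ic[OF lt(1) lt(3)] m by auto
    moreover have "phi_adj V E (cs ! 2) (cs ! 3)" using ic[OF lt(2) lt(3)] m by auto
    moreover have "cs ! 0 \<noteq> cs ! 2" "cs ! 0 \<noteq> cs ! 3" using ds cs(2) nth_eq_iff_index_eq by fastforce+
    ultimately show False using phi_iff[OF split homog] inI by metis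
  qed
  show ?thesis using P1 P2 P3 P4 P5 P6 P7 by blast
qed

end
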